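(* Let $\xi$ be an anti-involution of $\Lambda$ and let $M$ be a discriminant mirror with $M\cap H^4_\xi\neq\emptyset$. Then either (1) $M\cap H^4_\xi$ is a copy of $H^3$, namely $H^4_\xi\cap r^\perp$ for a root $r$ of $\Lambda^\xi$ of norm $1$ or $3$; or (2) $M\cap H^4_\xi$ is a copy of $H^2$, namely $H^4_\xi\cap R^\perp$ for a $G_2$ root system $R$ in $\Lambda^\xi$. Conversely, if $r$ is a root of norm $1$ or $3$ in $\Lambda^\xi$ (resp. $R$ is a $G_2$ root system in $\Lambda^\xi$), then $H^4_\xi\cap r^\perp$ (resp. $H^4_\xi\cap R^\perp$) is the intersection of $H^4_\xi$ with some discriminant mirror.
   Context: Let $\omega=e^{2\pi i/3}$, $\mathcal{E}=\mathbb{Z}[\omega]$, $\theta=\sqrt{-3}$. Let $\Lambda=\mathcal{E}^5$ with Hermitian form $h(x,y)=-x_0\bar y_0+x_1\bar y_1+\dots+x_4\bar y_4$; the norm of $x$ is $h(x,x)$. $\mathbb{C}H^4$ is the set of negative lines in $\Lambda\otimes_{\mathcal{E}}\mathbb{C}$. An anti-involution of $\Lambda$ is an additive bijection $\xi$ with $\xi(ax)=\bar a\xi(x)$, $\xi^2=\mathrm{id}$, $h(\xi x,\xi y)=\overline{h(x,y)}$; $H^4_\xi$ is the fixed-point set of $\xi$ in $\mathbb{C}H^4$ (a copy of real hyperbolic $4$-space), and $\Lambda^\xi$ is the $\mathbb{Z}$-lattice of $\xi$-fixed vectors. A discriminant mirror is a hyperplane $r^\perp\subset\mathbb{C}H^4$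 with $r\in\Lambda$ of norm $1$. A root of $\Lambda^\xi$ is a vector of $\Lambda^\xi$ of norm $1$ or $2$, or a vector of $\Lambda^\xi$ of norm $3$ or $6$ that is divisible by $\theta$ in $\Lambda$. A $G_2$ root system in $\Lambda^\xi$ is a set of six roots of norm $2$ and six roots of norm $6$ of $\Lambda^\xi$, all lying in a two-dimensional sublattice of $\Lambda^\xi$; for a set $R$ of vectors, $R^\perp$ denotes the set of points of $\mathbb{C}H^4$ orthogonal to all of them. *)

theory Defs
  imports "HOL-Analysis.Analysis" "HOL-Library.Numeral_Type"
begin

type_synonym cvec = "complex ^ 5"

definition omega :: complex where
  "omega = cis (2 * pi / 3)"

definition theta :: complex where
  "theta = \<i> * complex_of_real (sqrt 3)"

definition eis :: "complex set" where
  "eis = {of_int a + of_int b * omega | a b. True}"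

definition Lam :: "cvec set" where
  "Lam = {x. \<forall>i. x $ i \<in> eis}"

definition herm :: "cvec \<Rightarrow> cvec \<Rightarrow> complex" where
  "herm x y = - (x $ 0) * cnj (y $ 0) + (\<Sum>i\<in>UNIV - {0::5}. x $ i * cnj (y $ i))"

definition anti_involution :: "(cvec \<Rightarrow> cvec) \<Rightarrow> bool" where
  "anti_involution xi \<longleftrightarrow>
     bij_betw xi Lam Lam \<and>
     (\<forall>x\<in>Lam. \<forall>y\<in>Lam. xi (x + y) = xi x + xi y) \<and>
     (\<forall>a\<in>eis. \<forall>x\<in>Lam. xi (a *s x) = cnj a *s xi x) \<and>
     (\<forall>x\<in>Lam. xi (xi x) = x) \<and>
     (\<forall>x\<in>Lam. \<forall>y\<in>Lam. herm (xi x) (xi y) = cnj (herm x y))"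

text \<open>The complex-antilinear extension of xi to Lambda tensor C = C^5.\<close>
definition xiC :: "(cvec \<Rightarrow> cvec) \<Rightarrow> cvec \<Rightarrow> cvec" where
  "xiC xi v = (\<Sum>i\<in>UNIV. cnj (v $ i) *s xi (axis i 1))"

definition cline :: "cvec \<Rightarrow> cvec set" where
  "cline v = {c *s v | c. True}"

definition CH4 :: "cvec set set" where
  "CH4 = {cline v | v. Re (herm v v) < 0}"

definition Hxi :: "(cvec \<Rightarrow> cvec) \<Rightarrow> cvec set set" where
  "Hxi xi = {L \<in> CH4. xiC xi ` L = L}"

definition Lam_fix :: "(cvec \<Rightarrow> cvec) \<Rightarrow> cvec set" where
  "Lam_fix xi = {x \<in> Lam. xi x = x}"

definition perp :: "cvec set \<Rightarrow> cvec set set" where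
  "perp R = {L \<in> CH4. \<forall>v\<in>L. \<forall>r\<in>R. herm v r = 0}"

definition discriminant_mirror :: "cvec set set \<Rightarrow> bool" where
  "discriminant_mirror M \<longleftrightarrow> (\<exists>r\<in>Lam. herm r r = 1 \<and> M = perp {r})"

definition lat_root :: "(cvec \<Rightarrow> cvec) \<Rightarrow> cvec \<Rightarrow> bool" where
  "lat_root xi x \<longleftrightarrow> x \<in> Lam_fix xi \<and>
     (herm x x = 1 \<or> herm x x = 2 \<or>
      ((herm x x = 3 \<or> herm x x = 6) \<and> (\<exists>y\<in>Lam. x = theta *s y)))"

definition G2_root_system :: "(cvec \<Rightarrow> cvec) \<Rightarrow> cvec set \<Rightarrow> bool" where
  "G2_root_system xi R \<longleftrightarrow>
     (\<forall>r\<in>R. lat_root xi r \<and> (herm r r = 2 \<or> herm r r = 6)) \<and>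
     card {r\<in>R. herm r r = 2} = 6 \<and> card {r\<in>R. herm r r = 6} = 6 \<and>
     (\<exists>u\<in>Lam_fix xi. \<exists>w\<in>Lam_fix xi.
        R \<subseteq> {of_int a *s u + of_int b *s w | a b. True})"

end

theory Submission
  imports Defs
begin

lemma UNIV5: "(UNIV :: 5 set) = {0,1,2,3,4}"
proof -
  have "x \<in> {0,1,2,3,4}" for x :: 5
  proof (induct x)
    case (of_int z)
    then have "z=0 \<or> z=1 \<or> z=2 \<or> z=3 \<or> z=4" by auto
    then show ?case by auto
  qed
  then show ?thesis by auto
qed

lemma all5: "(\<forall>i::5. P i) \<longleftrightarrow> P 0 \<and> P 1 \<and> P 2 \<and> P 3 \<and> P 4"
  using UNIV5 by (metis UNIV_I insertE empty_iff)

lemma vec5_eq: "(x::cvec) = y \<longleftrightarrow> x$0 = y$0 \<and> x$1 = y$1 \<and> x$2 = y$2 \<and> x$3 = y$3 \<and> x$4 = y$4"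
  by (simp add: vec_eq_iff all5)

lemma herm_expand: "herm x y = - (x$0 * cnj (y$0)) + x$1 * cnj (y$1) + x$2 * cnj (y$2) + x$3 * cnj (y$3) + x$4 * cnj (y$4)"
proof -
  have "UNIV - {0::5} = {1,2,3,4}" using UNIV5 by auto
  then show ?thesis unfolding herm_def by (simp add: algebra_simps)
qed

lemma sqrt3sq: "sqrt 3 * sqrt 3 = (3::real)" by simp

lemma omega_eq: "omega = Complex (-1/2) (sqrt 3 / 2)"
proof -
  have "cos (2*pi/3) = -1/2"
  proof -
    have "cos (2*pi/3) = cos (pi - pi/3)" by (rule arg_cong[where f=cos]) simp
    also have "\<dots> = - cos (pi/3)" by (rule cos_pi_minus)
    finally show ?thesis by (simp add: cos_60)
  qed
  moreover have "sin (2*pi/3) = sqrt 3 / 2"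
  proof -
    have "sin (2*pi/3) = sin (pi - pi/3)" by (rule arg_cong[where f=sin]) simp
    also have "\<dots> = sin (pi/3)" by (rule sin_pi_minus)
    finally show ?thesis by (simp add: sin_60)
  qed
  ultimately show ?thesis unfolding omega_def by (simp add: cis.ctr)
qed

lemma theta_eq: "theta = Complex 0 (sqrt 3)"
  unfolding theta_def by (simp add: complex_eq_iff)

lemma om_sq: "omega * omega = -1 - omega"
  by (simp add: omega_eq complex_eq_iff field_simps)
lemma om_cnj: "cnj omega = -1 - omega"
  by (simp add: omega_eq complex_eq_iff)
lemma om_norm: "omega * cnj omega = 1"
  by (simp add: omega_eq complex_eq_iff field_simps)
lemma theta_om: "theta = 1 + 2 * omega"
  by (simp add: omega_eq theta_eq complex_eq_iff)
lemma theta_cnj: "cnj theta = - theta"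
  by (simp add: theta_eq complex_eq_iff)
lemma theta_sq: "theta * theta = -3"
  by (simp add: theta_eq complex_eq_iff)
lemma theta_nz: "theta \<noteq> 0"
  by (simp add: theta_eq complex_eq_iff)
lemma om_nz: "omega \<noteq> 0"
  using om_norm by auto

lemma eis_iff: "z \<in> eis \<longleftrightarrow> (\<exists>a b. z = of_int a + of_int b * omega)"
  unfolding eis_def by auto

lemma eis_of_int[simp]: "of_int a \<in> eis"
  unfolding eis_iff by (rule exI[of _ a], rule exI[of _ 0]) simp
lemma eis_0[simp]: "0 \<in> eis" using eis_of_int[of 0] by simp
lemma eis_1[simp]: "1 \<in> eis" using eis_of_int[of 1] by simp
lemma eis_omega[simp]: "omega \<in> eis"
  unfolding eis_iff by (rule exI[of _ 0], rule exI[of _ 1]) simp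
lemma eis_add[simp]: "z \<in> eis \<Longrightarrow> w \<in> eis \<Longrightarrow> z + w \<in> eis"
  unfolding eis_iff by (auto, rule_tac x="a+aa" in exI, rule_tac x="b+ba" in exI, simp add: algebra_simps)
lemma eis_uminus[simp]: "z \<in> eis \<Longrightarrow> - z \<in> eis"
  unfolding eis_iff by (auto, rule_tac x="-a" in exI, rule_tac x="-b" in exI, simp add: algebra_simps)
lemma eis_diff[simp]: "z \<in> eis \<Longrightarrow> w \<in> eis \<Longrightarrow> z - w \<in> eis"
  using eis_add[of z "-w"] by simp
lemma eis_mult[simp]: "z \<in> eis \<Longrightarrow> w \<in> eis \<Longrightarrow> z * w \<in> eis"
proof -
  assume "z \<in> eis" "w \<in> eis"
  then obtain a b c d where z: "z = of_int a + of_int b * omega" and w: "w = of_int c + of_int d * omega"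
    unfolding eis_iff by auto
  have "z * w = of_int (a*c - b*d) + of_int (a*d + b*c - b*d) * omega"
    unfolding z w of_int_mult of_int_diff of_int_add using om_sq by algebra
  then show ?thesis unfolding eis_iff by blast
qed
lemma eis_cnj[simp]: "z \<in> eis \<Longrightarrow> cnj z \<in> eis"
proof -
  assume "z \<in> eis"
  then obtain a b where z: "z = of_int a + of_int b * omega" unfolding eis_iff by auto
  have "cnj z = of_int (a - b) + of_int (-b) * omega" unfolding z by (simp add: om_cnj algebra_simps)
  then show ?thesis unfolding eis_iff by blast
qed
lemma eis_theta[simp]: "theta \<in> eis"
  unfolding theta_om eis_iff by (rule exI[of _ 1], rule exI[of _ 2]) simp

lemma eis_normsq: "z \<in> eis \<Longrightarrow> \<exists>a b. z = of_int a + of_int b * omega \<and> z * cnj z = of_int (a*a - a*b + b*b)"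
proof -
  assume "z \<in> eis"
  then obtain a b where z: "z = of_int a + of_int b * omega" unfolding eis_iff by auto
  have "z * cnj z = of_int (a*a - a*b + b*b)"
    unfolding z complex_cnj_add complex_cnj_mult complex_cnj_of_int of_int_mult of_int_diff of_int_add
    using om_sq om_cnj by algebra
  then show ?thesis using z by blast
qed

lemma eis_norm_ge1: "z \<in> eis \<Longrightarrow> z \<noteq> 0 \<Longrightarrow> 1 \<le> (cmod z)^2"
proof -
  assume "z \<in> eis" "z \<noteq> 0"
  then obtain a b where z: "z = of_int a + of_int b * omega" and n: "z * cnj z = of_int (a*a - a*b + b*b)"
    using eis_normsq by blast
  have "complex_of_real ((cmod z)^2) = z * cnj z" by (rule complex_norm_square)
  then have e: "(cmod z)^2 = of_int (a*a - a*b + b*b)" using n by (metis of_real_eq_iff of_real_of_int_eq)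
  have nz: "(cmod z)^2 \<noteq> 0" using \<open>z\<noteq>0\<close> by simp
  have "a*a - a*b + b*b \<noteq> 0"
  proof
    assume "a*a - a*b + b*b = 0"
    then have "(cmod z)^2 = 0" using e by (simp only: of_int_0)
    with nz show False by simp
  qed
  moreover have "4*(a*a - a*b + b*b) = (2*a-b)*(2*a-b) + 3*(b*b)" by algebra
  moreover have "(2*a-b)*(2*a-b) \<ge> 0" "b*b \<ge> 0" by auto
  ultimately have "0 \<le> 4*(a*a - a*b + b*b)" by linarith
  then have "0 \<le> a*a - a*b + b*b" by simp
  with \<open>a*a - a*b + b*b \<noteq> 0\<close> have "a*a - a*b + b*b \<ge> 1" by linarith
  then have "real_of_int 1 \<le> real_of_int (a*a - a*b + b*b)" by (rule of_int_le_iff[THEN iffD2])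
  then show ?thesis using e by simp
qed

lemma herm_add_l: "herm (x + y) z = herm x z + herm y z" by (simp add: herm_expand algebra_simps)
lemma herm_add_r: "herm z (x + y) = herm z x + herm z y" by (simp add: herm_expand algebra_simps)
lemma herm_diff_l: "herm (x - y) z = herm x z - herm y z" by (simp add: herm_expand algebra_simps)
lemma herm_diff_r: "herm z (x - y) = herm z x - herm z y" by (simp add: herm_expand algebra_simps)
lemma herm_neg_l: "herm (- x) z = - herm x z" by (simp add: herm_expand algebra_simps)
lemma herm_neg_r: "herm z (- x) = - herm z x" by (simp add: herm_expand algebra_simps)
lemma herm_scale_l: "herm (c *s x) z = c * herm x z" by (simp add: herm_expand algebra_simps)
lemma herm_scale_r: "herm z (c *s x) = cnj c * herm z x" by (simp add: herm_expand algebra_simps)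
lemma herm_zero_l: "herm 0 z = 0" by (simp add: herm_expand)
lemma herm_zero_r: "herm z 0 = 0" by (simp add: herm_expand)
lemma herm_sym: "herm y x = cnj (herm x y)" by (simp add: herm_expand algebra_simps)
lemmas herm_lin = herm_add_l herm_add_r herm_diff_l herm_diff_r herm_neg_l herm_neg_r herm_scale_l herm_scale_r herm_zero_l herm_zero_r

lemma herm_self_Im: "Im (herm x x) = 0"
  by (simp add: herm_expand)
lemma herm_self_real: "herm x x = complex_of_real (Re (herm x x))"
  using herm_self_Im by (simp add: complex_eq_iff)

lemma herm_x0: "x$0 = 0 \<Longrightarrow> 0 \<le> Re (herm x x)"
  by (simp add: herm_expand)

lemma herm_x0_zero: "x$0 = 0 \<Longrightarrow> Re (herm x x) = 0 \<Longrightarrow> x = 0"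
proof -
  assume a: "x$0 = 0" "Re (herm x x) = 0"
  have e: "Re (herm x x) = (cmod (x$1))^2 + (cmod (x$2))^2 + (cmod (x$3))^2 + (cmod (x$4))^2"
    using a(1) by (simp add: herm_expand cmod_def power2_eq_square)
  have "(cmod (x$1))^2 = 0" "(cmod (x$2))^2 = 0" "(cmod (x$3))^2 = 0" "(cmod (x$4))^2 = 0"
    using a(2) e by (smt (verit) zero_le_power2)+
  then show ?thesis using a(1) by (simp add: vec5_eq)
qed

lemma signature:
  assumes v: "Re (herm v v) < 0" and o: "herm v z = 0" and z: "Re (herm z z) \<le> 0"
  shows "z = 0"
proof -
  define x where "x = (z$0) *s v - (v$0) *s z"
  have x0: "x$0 = 0" unfolding x_def by simp
  have ozv: "herm z v = 0" using o herm_sym[of z v] by simp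
  have hx: "herm x x = (z$0 * cnj (z$0)) * herm v v + (v$0 * cnj (v$0)) * herm z z"
    unfolding x_def by (simp only: herm_diff_l herm_diff_r herm_scale_l herm_scale_r o ozv) (simp add: algebra_simps)
  have r1: "Re ((z$0 * cnj (z$0)) * herm v v) = (cmod (z$0))^2 * Re (herm v v)"
    unfolding complex_norm_square[symmetric] by simp
  have r2: "Re ((v$0 * cnj (v$0)) * herm z z) = (cmod (v$0))^2 * Re (herm z z)"
    unfolding complex_norm_square[symmetric] by simp
  have g: "0 \<le> Re (herm x x)" using herm_x0[OF x0] .
  have t1: "(cmod (z$0))^2 * Re (herm v v) \<le> 0" using v by (simp add: mult_nonneg_nonpos)
  have t2: "(cmod (v$0))^2 * Re (herm z z) \<le> 0" using z by (simp add: mult_nonneg_nonpos)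
  have sum: "Re (herm x x) = (cmod (z$0))^2 * Re (herm v v) + (cmod (v$0))^2 * Re (herm z z)"
  proof -
    have "Re (herm x x) = Re ((z$0 * cnj (z$0)) * herm v v) + Re ((v$0 * cnj (v$0)) * herm z z)"
      using hx by (simp only: plus_complex.sel)
    then show ?thesis using r1 r2 by (simp only:)
  qed
  have "(cmod (z$0))^2 * Re (herm v v) = 0" using t1 t2 g sum by linarith
  then have z0: "z$0 = 0" using v by simp
  have "Re (herm x x) = 0" using t1 t2 g sum by linarith
  then have "x = 0" using herm_x0_zero[OF x0] by simp
  then have xz: "(v$0) *s z = 0" unfolding x_def using z0 by simp
  show ?thesis
  proof (cases "v$0 = 0")
    case True
    then have "0 \<le> Re (herm v v)" using herm_x0 by blast
    then show ?thesis using v by simp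
  next
    case False
    then show ?thesis using xz by simp
  qed
qed

lemma Lam_iff: "x \<in> Lam \<longleftrightarrow> (\<forall>i. x$i \<in> eis)" unfolding Lam_def by simp
lemma Lam_add[simp]: "x \<in> Lam \<Longrightarrow> y \<in> Lam \<Longrightarrow> x + y \<in> Lam" by (simp add: Lam_iff)
lemma Lam_diff[simp]: "x \<in> Lam \<Longrightarrow> y \<in> Lam \<Longrightarrow> x - y \<in> Lam" by (simp add: Lam_iff)
lemma Lam_neg[simp]: "x \<in> Lam \<Longrightarrow> - x \<in> Lam" by (simp add: Lam_iff)
lemma Lam_scale[simp]: "c \<in> eis \<Longrightarrow> x \<in> Lam \<Longrightarrow> c *s x \<in> Lam" by (simp add: Lam_iff)
lemma Lam_axis[simp]: "axis i 1 \<in> Lam" by (simp add: Lam_iff axis_def)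
lemma Lam_zero[simp]: "0 \<in> Lam" by (simp add: Lam_iff)
lemma herm_Lam: "x \<in> Lam \<Longrightarrow> y \<in> Lam \<Longrightarrow> herm x y \<in> eis"
  by (simp add: Lam_iff herm_expand)


lemma distinct5: "(0::5) \<noteq> 1" "(0::5) \<noteq> 2" "(0::5) \<noteq> 3" "(0::5) \<noteq> 4"
   "(1::5) \<noteq> 2" "(1::5) \<noteq> 3" "(1::5) \<noteq> 4" "(2::5) \<noteq> 3" "(2::5) \<noteq> 4" "(3::5) \<noteq> 4"
  by simp_all

lemmas d5 = distinct5 distinct5[symmetric]

lemma vec_decomp: "(x::cvec) = x$0 *s axis 0 1 + x$1 *s axis 1 1 + x$2 *s axis 2 1 + x$3 *s axis 3 1 + x$4 *s axis 4 1"
  by (simp add: vec5_eq axis_def)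

lemma sum5: "(\<Sum>i\<in>(UNIV::5 set). f i) = f 0 + f 1 + f 2 + f 3 + f 4"
  apply (subst UNIV5)
  apply (subst sum.insert, simp, simp add: distinct5)+
  apply (simp add: add.assoc)
  done

lemma xiC_expand: "xiC xi v = cnj (v$0) *s xi (axis 0 1) + cnj (v$1) *s xi (axis 1 1) + cnj (v$2) *s xi (axis 2 1) + cnj (v$3) *s xi (axis 3 1) + cnj (v$4) *s xi (axis 4 1)"
  unfolding xiC_def sum5 ..



lemma cline_self: "v \<in> cline v"
  unfolding cline_def by (rule CollectI, rule exI[of _ 1]) simp
lemma cline_elem: "z \<in> cline v \<Longrightarrow> \<exists>c. z = c *s v"
  unfolding cline_def by auto
lemma CH4_elem: "L \<in> CH4 \<Longrightarrow> \<exists>v. L = cline v \<and> Re (herm v v) < 0"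
  unfolding CH4_def by auto
lemma perp_iff: "L \<in> perp R \<longleftrightarrow> L \<in> CH4 \<and> (\<forall>z\<in>L. \<forall>r\<in>R. herm z r = 0)"
  unfolding perp_def by auto
lemma Hxi_iff: "L \<in> Hxi xi \<longleftrightarrow> L \<in> CH4 \<and> xiC xi ` L = L"
  unfolding Hxi_def by auto

lemma perp_scale: "c \<noteq> 0 \<Longrightarrow> perp {c *s r} = perp {r}"
  by (rule set_eqI) (simp add: perp_iff herm_scale_r)

lemma neg_vec_in_L: "L \<in> CH4 \<Longrightarrow> \<exists>v\<in>L. Re (herm v v) < 0"
  using CH4_elem cline_self by blast

lemma sq_le1:
  fixes b :: int assumes "b*b \<le> 1" shows "-1 \<le> b \<and> b \<le> 1"
proof (rule ccontr)
  assume "\<not> ?thesis"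
  then have "2 \<le> b \<or> b \<le> -2" by auto
  then have "4 \<le> b*b"
  proof
    assume "2 \<le> b" then show ?thesis using mult_mono[of 2 b 2 b] by simp
  next
    assume "b \<le> -2" then have "2 \<le> -b" by simp
    then show ?thesis using mult_mono[of 2 "-b" 2 "-b"] by simp
  qed
  with assms show False by simp
qed

lemma unit6:
  fixes a b :: int
  assumes "a*a - a*b + b*b = 1"
  shows "(a = 1 \<and> b = 0) \<or> (a = -1 \<and> b = 0) \<or> (a = 0 \<and> b = 1) \<or> (a = 0 \<and> b = -1) \<or> (a = 1 \<and> b = 1) \<or> (a = -1 \<and> b = -1)"
proof -
  have e1: "4 = (2*a-b)*(2*a-b) + 3*(b*b)" using assms by algebra
  have e2: "4 = (2*b-a)*(2*b-a) + 3*(a*a)" using assms by algebra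
  have "(2*a-b)*(2*a-b) \<ge> 0" "(2*b-a)*(2*b-a) \<ge> 0" by auto
  then have "b*b \<le> 1" "a*a \<le> 1" using e1 e2 by linarith+
  then have "-1 \<le> b \<and> b \<le> 1" "-1 \<le> a \<and> a \<le> 1" using sq_le1 by blast+
  then have "a \<in> {-1,0,1}" "b \<in> {-1,0,1}" by auto
  then show ?thesis using assms by auto
qed

lemma ONP:
  assumes "herm n n = 0" "herm m m = 0" "herm n m = 0" "n \<noteq> 0"
  shows "\<exists>mu. m = mu *s n"
proof -
  define x where "x = (m$0) *s n - (n$0) *s m"
  have x0: "x$0 = 0" unfolding x_def by simp
  have omn: "herm m n = 0" using assms(3) herm_sym[of m n] by simp
  have "herm x x = (m$0 * cnj (m$0)) * herm n n + (n$0 * cnj (n$0)) * herm m m"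
    unfolding x_def by (simp only: herm_diff_l herm_diff_r herm_scale_l herm_scale_r assms(3) omn) (simp add: algebra_simps)
  then have "herm x x = 0" using assms by simp
  then have "x = 0" using herm_x0_zero[OF x0] by simp
  then have e: "(m$0) *s n = (n$0) *s m" unfolding x_def by simp
  have "n$0 \<noteq> 0"
  proof
    assume "n$0 = 0"
    then have "n = 0" using herm_x0_zero[of n] assms(1) by simp
    then show False using assms(4) by simp
  qed
  have "(m$0 / n$0) *s n = inverse (n$0) *s ((m$0) *s n)" by (simp add: vector_smult_assoc field_simps)
  also have "\<dots> = inverse (n$0) *s ((n$0) *s m)" using e by simp
  also have "\<dots> = m" using \<open>n$0 \<noteq> 0\<close> by (simp add: vector_smult_assoc)
  finally have "m = (m$0 / n$0) *s n" by simp
  then show ?thesis by blast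
qed

definition zspan :: "cvec \<Rightarrow> cvec \<Rightarrow> cvec set" where
  "zspan u w = {of_int a *s u + of_int b *s w | a b. True}"

lemma DEP:
  assumes "x1 \<in> zspan u w" "x2 \<in> zspan u w" "x3 \<in> zspan u w"
  shows "\<exists>al be ga :: int. \<not> (al = 0 \<and> be = 0 \<and> ga = 0) \<and> of_int al *s x1 + of_int be *s x2 + of_int ga *s x3 = 0"
proof -
  obtain p1 q1 p2 q2 p3 q3 where x1: "x1 = of_int p1 *s u + of_int q1 *s w"
    and x2: "x2 = of_int p2 *s u + of_int q2 *s w" and x3: "x3 = of_int p3 *s u + of_int q3 *s w"
    using assms unfolding zspan_def by blast
  define D12 where "D12 = p1*q2 - p2*q1"
  define D13 where "D13 = p1*q3 - p3*q1"
  define D23 where "D23 = p2*q3 - p3*q2"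
  have id: "of_int D23 *s x1 + of_int (-D13) *s x2 + of_int D12 *s x3 = 0"
    unfolding x1 x2 x3 D12_def D13_def D23_def vec_eq_iff
    by (simp add: algebra_simps)
  show ?thesis
  proof (cases "D23 = 0 \<and> D13 = 0 \<and> D12 = 0")
    case False
    then show ?thesis using id by (intro exI[of _ D23] exI[of _ "-D13"] exI[of _ D12]) auto
  next
    case True
    then have d: "p1*q2 - p2*q1 = 0" unfolding D12_def by simp
    show ?thesis
    proof (cases "p1 = 0 \<and> q1 = 0")
      case True
      then have "x1 = 0" unfolding x1 by simp
      then show ?thesis by (intro exI[of _ 1] exI[of _ 0] exI[of _ 0]) simp
    next
      case False
      show ?thesis
      proof (cases "p1 = 0")
        case False
        have "of_int (-p2) *s x1 + of_int p1 *s x2 + of_int 0 *s x3 = of_int (p1*q2 - p2*q1) *s w"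
          unfolding x1 x2 vec_eq_iff by (simp add: algebra_simps)
        then have "of_int (-p2) *s x1 + of_int p1 *s x2 + of_int 0 *s x3 = 0" using d by simp
        then show ?thesis using False by (intro exI[of _ "-p2"] exI[of _ p1] exI[of _ 0]) simp
      next
        case True
        then have "q1 \<noteq> 0" using \<open>\<not> (p1 = 0 \<and> q1 = 0)\<close> by simp
        have "of_int (-q2) *s x1 + of_int q1 *s x2 + of_int 0 *s x3 = of_int (p2*q1 - p1*q2) *s u"
          unfolding x1 x2 vec_eq_iff by (simp add: algebra_simps)
        moreover have d': "p2*q1 - p1*q2 = 0" using d by simp
        ultimately have "of_int (-q2) *s x1 + of_int q1 *s x2 + of_int 0 *s x3 = 0" by (simp only: d' of_int_0 vector_smult_lzero)
        then show ?thesis using \<open>q1 \<noteq> 0\<close> by (intro exI[of _ "-q2"] exI[of _ q1] exI[of _ 0]) simp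
      qed
    qed
  qed
qed


context
  fixes xi assumes AI: "anti_involution xi"
begin

lemma AI_all: "bij_betw xi Lam Lam \<and>
     (\<forall>x\<in>Lam. \<forall>y\<in>Lam. xi (x + y) = xi x + xi y) \<and>
     (\<forall>a\<in>eis. \<forall>x\<in>Lam. xi (a *s x) = cnj a *s xi x) \<and>
     (\<forall>x\<in>Lam. xi (xi x) = x) \<and>
     (\<forall>x\<in>Lam. \<forall>y\<in>Lam. herm (xi x) (xi y) = cnj (herm x y))"
  using AI unfolding anti_involution_def .
lemmas AI_parts = AI_all[THEN conjunct1] AI_all[THEN conjunct2, THEN conjunct1]
   AI_all[THEN conjunct2, THEN conjunct2, THEN conjunct1]
   AI_all[THEN conjunct2, THEN conjunct2, THEN conjunct2, THEN conjunct1]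
   AI_all[THEN conjunct2, THEN conjunct2, THEN conjunct2, THEN conjunct2]

lemma xi_Lam[simp]: "x \<in> Lam \<Longrightarrow> xi x \<in> Lam"
  using AI_parts(1) by (rule bij_betw_apply)
lemma xi_add: "x \<in> Lam \<Longrightarrow> y \<in> Lam \<Longrightarrow> xi (x + y) = xi x + xi y"
  using AI_parts(2) by blast
lemma xi_scale: "a \<in> eis \<Longrightarrow> x \<in> Lam \<Longrightarrow> xi (a *s x) = cnj a *s xi x"
  using AI_parts(3) by blast
lemma xi_inv[simp]: "x \<in> Lam \<Longrightarrow> xi (xi x) = x"
  using AI_parts(4) by blast
lemma xi_herm: "x \<in> Lam \<Longrightarrow> y \<in> Lam \<Longrightarrow> herm (xi x) (xi y) = cnj (herm x y)"
  using AI_parts(5) by blast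
lemma xi_neg: "x \<in> Lam \<Longrightarrow> xi (- x) = - xi x"
  using xi_scale[of "-1" x] by (simp add: vector_sneg_minus1[symmetric])
lemma xi_diff: "x \<in> Lam \<Longrightarrow> y \<in> Lam \<Longrightarrow> xi (x - y) = xi x - xi y"
  using xi_add[of x "-y"] xi_neg[of y] by simp

lemma xiC_Lam: "x \<in> Lam \<Longrightarrow> xiC xi x = xi x"
proof -
  assume x: "x \<in> Lam"
  then have c: "x$i \<in> eis" for i by (simp add: Lam_iff)
  have "xi x = xi (x$0 *s axis 0 1 + x$1 *s axis 1 1 + x$2 *s axis 2 1 + x$3 *s axis 3 1 + x$4 *s axis 4 1)"
    by (rule arg_cong[where f=xi], rule vec_decomp)
  also have "\<dots> = cnj (x$0) *s xi (axis 0 1) + cnj (x$1) *s xi (axis 1 1) + cnj (x$2) *s xi (axis 2 1) + cnj (x$3) *s xi (axis 3 1) + cnj (x$4) *s xi (axis 4 1)"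
    by (simp add: xi_add xi_scale c)
  finally show ?thesis unfolding xiC_expand by simp
qed

lemma herm_axis: "herm (axis i 1) (axis j 1) = (if i = j then (if i = 0 then -1 else 1) else 0)"
proof -
  have "i \<in> {0,1,2,3,4}" "j \<in> {0,1,2,3,4}" using UNIV5 by blast+
  then show ?thesis by (auto simp: herm_expand axis_def d5)
qed

lemma xi_axis_herm: "herm (xi (axis i 1)) (xi (axis j 1)) = (if i = j then (if i = 0 then -1 else 1) else 0)"
  by (simp add: xi_herm herm_axis)

lemma xiC_herm1: "herm (xiC xi x) (xi (axis j 1)) = cnj (x$j) * (if j = 0 then -1 else 1)"
proof -
  have "j \<in> {0,1,2,3,4}" using UNIV5 by blast
  then show ?thesis
    unfolding xiC_expand
    by (simp only: herm_add_l herm_scale_l xi_axis_herm) (auto simp: d5)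
qed

lemma xiC_herm: "herm (xiC xi x) (xiC xi y) = cnj (herm x y)"
proof -
  have e: "xiC xi y = cnj (y$0) *s xi (axis 0 1) + cnj (y$1) *s xi (axis 1 1) + cnj (y$2) *s xi (axis 2 1) + cnj (y$3) *s xi (axis 3 1) + cnj (y$4) *s xi (axis 4 1)"
    by (rule xiC_expand)
  have "herm (xiC xi x) (xiC xi y) = herm (xiC xi x) (cnj (y$0) *s xi (axis 0 1) + cnj (y$1) *s xi (axis 1 1) + cnj (y$2) *s xi (axis 2 1) + cnj (y$3) *s xi (axis 3 1) + cnj (y$4) *s xi (axis 4 1))"
    by (simp only: e)
  also have "\<dots> = y$0 * herm (xiC xi x) (xi (axis 0 1)) + y$1 * herm (xiC xi x) (xi (axis 1 1)) + y$2 * herm (xiC xi x) (xi (axis 2 1)) + y$3 * herm (xiC xi x) (xi (axis 3 1)) + y$4 * herm (xiC xi x) (xi (axis 4 1))"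
    by (simp only: herm_add_r herm_scale_r complex_cnj_cnj)
  also have "\<dots> = y$0 * (- cnj (x$0)) + y$1 * cnj (x$1) + y$2 * cnj (x$2) + y$3 * cnj (x$3) + y$4 * cnj (x$4)"
    using xiC_herm1[of x 0] xiC_herm1[of x 1] xiC_herm1[of x 2] xiC_herm1[of x 3] xiC_herm1[of x 4]
    by (simp add: d5)
  also have "\<dots> = cnj (herm x y)"
    unfolding herm_expand by (simp add: algebra_simps)
  finally show ?thesis .
qed


lemma Hxi_closed: "L \<in> Hxi xi \<Longrightarrow> z \<in> L \<Longrightarrow> xiC xi z \<in> L"
  unfolding Hxi_iff by blast

lemma orth_xi:
  assumes L: "L \<in> Hxi xi" and r: "r \<in> Lam" and o: "\<forall>z\<in>L. herm z r = 0" and z: "z \<in> L"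
  shows "herm z (xi r) = 0"
proof -
  have "herm (xiC xi z) r = 0" using o Hxi_closed[OF L z] by blast
  moreover have "herm (xiC xi z) (xiC xi (xi r)) = cnj (herm z (xi r))" by (rule xiC_herm)
  moreover have "xiC xi (xi r) = r" using r by (simp add: xiC_Lam)
  ultimately show ?thesis by (metis complex_cnj_zero_iff)
qed

lemma xi_of_int: "x \<in> Lam \<Longrightarrow> xi (of_int k *s x) = of_int k *s xi x"
  using xi_scale[of "of_int k" x] by simp

lemma no_mirror_big:
  assumes r: "r \<in> Lam" and n1: "herm r r = 1" and big: "1 < cmod (herm r (xi r))"
  shows "Hxi xi \<inter> perp {r} = {}"
proof (rule ccontr)
  assume "Hxi xi \<inter> perp {r} \<noteq> {}"
  then obtain L where L: "L \<in> Hxi xi" "L \<in> perp {r}" by blast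
  then have "L \<in> CH4" unfolding Hxi_iff by blast
  then obtain v where v: "v \<in> L" "Re (herm v v) < 0" using neg_vec_in_L by blast
  have o: "\<forall>z\<in>L. herm z r = 0" using L(2) unfolding perp_iff by blast
  have hv1: "herm v r = 0" using o v by blast
  have hv2: "herm v (xi r) = 0" using orth_xi[OF L(1) r o v(1)] .
  define c where "c = herm r (xi r)"
  define w where "w = r - c *s xi r"
  have hvw: "herm v w = 0" unfolding w_def by (simp add: herm_diff_r herm_scale_r hv1 hv2)
  have xx: "herm (xi r) (xi r) = 1" using xi_herm[OF r r] n1 by simp
  have xr: "herm (xi r) r = cnj c" unfolding c_def by (rule herm_sym)
  have hww: "herm w w = 1 - c * cnj c"
    unfolding w_def by (simp only: herm_diff_l herm_diff_r herm_scale_l herm_scale_r n1 xx xr c_def[symmetric]) (simp add: algebra_simps)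
  have "c * cnj c = complex_of_real ((cmod c)^2)" by (rule complex_norm_square[symmetric])
  then have re: "Re (herm w w) = 1 - (cmod c)^2" using hww by simp
  have "1 < (cmod c)^2" using big unfolding c_def by (simp add: one_less_power)
  then have "Re (herm w w) \<le> 0" using re by simp
  then have "w = 0" using signature[OF v(2) hvw] by simp
  then have "Re (herm w w) = 0" by (simp add: herm_zero_l)
  then show False using re \<open>1 < (cmod c)^2\<close> by simp
qed

lemma no_three_fixed_nulls: "\<exists>n\<in>{axis 0 1 + axis 1 1, axis 0 1 - axis 1 1, axis 0 1 + omega *s axis 1 1}. herm n (xi n) \<noteq> 0"
proof (rule ccontr)
  assume "\<not> ?thesis"
  then have z: "herm n (xi n) = 0" if "n \<in> {axis 0 1 + axis 1 1, axis 0 1 - axis 1 1, axis 0 1 + omega *s axis 1 1}" for n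
    using that by blast
  define e0 where "e0 = (axis 0 1 :: cvec)"
  define e1 where "e1 = (axis 1 1 :: cvec)"
  define a where "a = xi e0"
  define b where "b = xi e1"
  have L: "e0 \<in> Lam" "e1 \<in> Lam" unfolding e0_def e1_def by simp_all
  have prp: "\<exists>mu. xi n = mu *s n" if "n \<in> Lam" "herm n n = 0" "n \<noteq> 0" "herm n (xi n) = 0" for n
  proof (rule ONP)
    show "herm n n = 0" by fact
    show "herm (xi n) (xi n) = 0" using xi_herm[OF that(1) that(1)] that(2) by simp
    show "herm n (xi n) = 0" by fact
    show "n \<noteq> 0" by fact
  qed
  have n1: "\<exists>mu. xi (e0 + e1) = mu *s (e0 + e1)"
  proof (rule prp)
    show "e0 + e1 \<in> Lam" using L by simp
    show "herm (e0 + e1) (e0 + e1) = 0" "e0 + e1 \<noteq> 0" unfolding e0_def e1_def by (simp_all add: herm_expand axis_def vec5_eq d5)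
    show "herm (e0 + e1) (xi (e0 + e1)) = 0" using z unfolding e0_def e1_def by blast
  qed
  have n2: "\<exists>mu. xi (e0 - e1) = mu *s (e0 - e1)"
  proof (rule prp)
    show "e0 - e1 \<in> Lam" using L by simp
    show "herm (e0 - e1) (e0 - e1) = 0" "e0 - e1 \<noteq> 0" unfolding e0_def e1_def by (simp_all add: herm_expand axis_def vec5_eq d5)
    show "herm (e0 - e1) (xi (e0 - e1)) = 0" using z unfolding e0_def e1_def by blast
  qed
  have n3: "\<exists>mu. xi (e0 + omega *s e1) = mu *s (e0 + omega *s e1)"
  proof (rule prp)
    show "e0 + omega *s e1 \<in> Lam" using L by simp
    show "herm (e0 + omega *s e1) (e0 + omega *s e1) = 0" "e0 + omega *s e1 \<noteq> 0" unfolding e0_def e1_def by (simp_all add: herm_expand axis_def vec5_eq d5 om_norm)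
    show "herm (e0 + omega *s e1) (xi (e0 + omega *s e1)) = 0" using z unfolding e0_def e1_def by blast
  qed
  obtain m1 where m1: "a + b = m1 *s (e0 + e1)" using n1 xi_add[OF L] unfolding a_def b_def by auto
  obtain m2 where m2: "a - b = m2 *s (e0 - e1)" using n2 xi_diff[OF L] unfolding a_def b_def by auto
  obtain m3 where m3: "a + cnj omega *s b = m3 *s (e0 + omega *s e1)"
    using n3 xi_add[OF L(1), of "omega *s e1"] xi_scale[of omega e1] L unfolding a_def b_def by auto
  have c1: "a$0 + b$0 = m1" "a$1 + b$1 = m1"
    using arg_cong[OF m1, of "\<lambda>v. v$0"] arg_cong[OF m1, of "\<lambda>v. v$1"] by (simp_all add: e0_def e1_def axis_def d5)
  have c1k: "a$k + b$k = 0" if "k \<noteq> 0" "k \<noteq> 1" for k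
    using arg_cong[OF m1, of "\<lambda>v. v$k"] that by (simp add: e0_def e1_def axis_def)
  have c2: "a$0 - b$0 = m2" "a$1 - b$1 = - m2"
    using arg_cong[OF m2, of "\<lambda>v. v$0"] arg_cong[OF m2, of "\<lambda>v. v$1"] by (simp_all add: e0_def e1_def axis_def d5)
  have c2k: "a$k - b$k = 0" if "k \<noteq> 0" "k \<noteq> 1" for k
    using arg_cong[OF m2, of "\<lambda>v. v$k"] that by (simp add: e0_def e1_def axis_def)
  have c3: "a$0 + cnj omega * b$0 = m3" "a$1 + cnj omega * b$1 = m3 * omega"
    using arg_cong[OF m3, of "\<lambda>v. v$0"] arg_cong[OF m3, of "\<lambda>v. v$1"] by (simp_all add: e0_def e1_def axis_def d5 mult.commute)
  have ak: "a$k = 0" if "k \<noteq> 0" "k \<noteq> 1" for k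
  proof -
    have "a$k = ((a$k + b$k) + (a$k - b$k)) / 2" by (simp add: field_simps)
    then show ?thesis using c1k[OF that] c2k[OF that] by simp
  qed
  have b0: "b$0 = a$1" "b$1 = a$0"
  proof -
    have "b$0 = ((a$0 + b$0) - (a$0 - b$0)) / 2" by (simp add: field_simps)
    also have "\<dots> = (m1 - m2) / 2" using c1 c2 by simp
    also have "\<dots> = ((a$1 + b$1) + (a$1 - b$1)) / 2" using c1 c2 by simp
    also have "\<dots> = a$1" by (simp add: field_simps)
    finally show "b$0 = a$1" .
    have "b$1 = ((a$1 + b$1) - (a$1 - b$1)) / 2" by (simp add: field_simps)
    also have "\<dots> = (m1 + m2) / 2" using c1 c2 by simp
    also have "\<dots> = ((a$0 + b$0) + (a$0 - b$0)) / 2" using c1 c2 by simp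
    also have "\<dots> = a$0" by (simp add: field_simps)
    finally show "b$1 = a$0" .
  qed
  have e1: "a$1 + cnj omega * a$0 = m3 * omega" using c3(2) b0 by simp
  have "m3 * omega = (a$0 + cnj omega * a$1) * omega" using c3(1) b0 by simp
  also have "\<dots> = omega * a$0 + (omega * cnj omega) * a$1" by (simp add: algebra_simps)
  also have "\<dots> = omega * a$0 + a$1" by (simp add: om_norm)
  finally have "a$1 + cnj omega * a$0 = omega * a$0 + a$1" using e1 by simp
  then have "(cnj omega - omega) * a$0 = 0" by (simp add: algebra_simps)
  moreover have "cnj omega - omega \<noteq> 0" by (simp add: omega_eq complex_eq_iff)
  ultimately have a0: "a$0 = 0" by simp
  have "herm a a = a$1 * cnj (a$1)"
    using a0 ak[of 2] ak[of 3] ak[of 4] by (simp add: herm_expand d5)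
  then have "Re (herm a a) \<ge> 0" by (simp add: complex_norm_square[symmetric])
  moreover have "herm a a = -1" unfolding a_def using xi_herm[OF L(1) L(1)] by (simp add: e0_def herm_axis)
  ultimately show False by simp
qed

lemma exists_disjoint_mirror: "\<exists>r\<in>Lam. herm r r = 1 \<and> Hxi xi \<inter> perp {r} = {}"
proof -
  obtain n where n: "n \<in> {axis 0 1 + axis 1 1, axis 0 1 - axis 1 1, axis 0 1 + omega *s axis 1 1}" "herm n (xi n) \<noteq> 0"
    using no_three_fixed_nulls by blast
  define e2 where "e2 = (axis 2 1 :: cvec)"
  have nL: "n \<in> Lam" using n(1) by auto
  have e2L: "e2 \<in> Lam" unfolding e2_def by simp
  have nn: "herm n n = 0" using n(1) by (auto simp: herm_expand axis_def d5 om_norm)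
  have ne: "herm e2 n = 0" "herm n e2 = 0" using n(1) by (auto simp: herm_expand axis_def d5 e2_def)
  have ee: "herm e2 e2 = 1" by (simp add: herm_axis e2_def d5)
  define r where "r = (\<lambda>k::int. e2 + of_int k *s n)"
  define A where "A = herm e2 (xi e2)"
  define B where "B = herm e2 (xi n) + herm n (xi e2)"
  define C where "C = herm n (xi n)"
  have rL: "r k \<in> Lam" for k unfolding r_def using nL e2L by simp
  have rn: "herm (r k) (r k) = 1" for k
    unfolding r_def by (simp add: herm_add_l herm_add_r herm_scale_l herm_scale_r ne nn ee)
  have xr: "xi (r k) = xi e2 + of_int k *s xi n" for k
    unfolding r_def using xi_add[OF e2L, of "of_int k *s n"] xi_of_int[OF nL] nL by simp
  have cf: "herm (r k) (xi (r k)) = A + of_int k * B + of_int k * of_int k * C" for k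
    unfolding xr unfolding r_def A_def B_def C_def
    by (simp add: herm_add_l herm_add_r herm_scale_l herm_scale_r algebra_simps)
  have Ceis: "C \<in> eis" unfolding C_def using nL by (simp add: herm_Lam)
  have C1: "1 \<le> cmod C"
  proof -
    have "1 \<le> (cmod C)^2" using eis_norm_ge1[OF Ceis] n(2) unfolding C_def by simp
    show ?thesis
    proof (rule ccontr)
      assume "\<not> 1 \<le> cmod C"
      then have c1: "cmod C < 1" by simp
      have "cmod C * cmod C \<le> cmod C * 1" using c1 by (intro mult_left_mono) simp_all
      then have "(cmod C)^2 < 1" using c1 by (simp add: power2_eq_square)
      with \<open>1 \<le> (cmod C)^2\<close> show False by simp
    qed
  qed
  define K :: int where "K = ceiling (cmod A) + 2"
  have K1: "cmod A + 2 \<le> of_int K" unfolding K_def by linarith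
  then have Kpos: "(1::real) \<le> of_int K" using norm_ge_zero[of A] by linarith
  have KK: "of_int K \<le> (of_int K :: real) * of_int K" using Kpos by (simp add: mult_le_cancel_left1)
  have sum: "herm (r K) (xi (r K)) + herm (r (-K)) (xi (r (-K))) = 2 * A + 2 * (of_int K * of_int K) * C"
    unfolding cf by (simp add: algebra_simps)
  have "cmod (2 * A + 2 * (of_int K * of_int K) * C) \<ge> 2 * (of_int K * of_int K) * cmod C - 2 * cmod A"
  proof -
    have "cmod (2 * (of_int K * of_int K) * C) \<le> cmod (2 * A + 2 * (of_int K * of_int K) * C) + cmod (2 * A)"
      using norm_triangle_ineq4[of "2 * A + 2 * (of_int K * of_int K) * C" "2 * A"] by simp
    moreover have "cmod (2 * (of_int K * of_int K) * C) = 2 * (of_int K * of_int K) * cmod C"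
      by (simp add: norm_mult)
    moreover have "cmod (2 * A) = 2 * cmod A" by (simp add: norm_mult)
    ultimately show ?thesis by linarith
  qed
  moreover have "2 * (of_int K * of_int K) * cmod C \<ge> 2 * (of_int K * of_int K)"
    using C1 by (simp add: mult_le_cancel_left1)
  ultimately have "cmod (herm (r K) (xi (r K)) + herm (r (-K)) (xi (r (-K)))) \<ge> 4"
    unfolding sum using K1 KK by linarith
  then have "cmod (herm (r K) (xi (r K))) + cmod (herm (r (-K)) (xi (r (-K)))) \<ge> 4"
    using norm_triangle_ineq order_trans by blast
  then have "\<exists>k. 1 < cmod (herm (r k) (xi (r k)))"
  proof -
    assume h4: "cmod (herm (r K) (xi (r K))) + cmod (herm (r (-K)) (xi (r (-K)))) \<ge> 4"
    show ?thesis
    proof (rule ccontr)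
      assume "\<not> ?thesis"
      then have "cmod (herm (r K) (xi (r K))) \<le> 1" "cmod (herm (r (-K)) (xi (r (-K)))) \<le> 1" using not_less by blast+
      then show False using h4 by linarith
    qed
  qed
  then obtain k where "1 < cmod (herm (r k) (xi (r k)))" by blast
  then show ?thesis using no_mirror_big[OF rL rn] rL rn by blast
qed

lemma dep_case1:
  assumes r: "r \<in> Lam" "herm r r = 1" and lam: "xi r = lam *s r"
    and e: "e \<in> eis" "e * cnj e = 1" "cnj e * lam = e"
  shows "\<exists>r'. lat_root xi r' \<and> (herm r' r' = 1 \<or> herm r' r' = 3) \<and> perp {r'} = perp {r}"
proof -
  have enz: "e \<noteq> 0" using e(2) by auto
  have L: "e *s r \<in> Lam" using e r by simp
  have fx: "xi (e *s r) = e *s r" using xi_scale[OF e(1) r(1)] lam e(3) by (simp add: vector_smult_assoc)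
  have n: "herm (e *s r) (e *s r) = 1" using e(2) r(2) by (simp add: herm_scale_l herm_scale_r mult.commute)
  have "lat_root xi (e *s r)" unfolding lat_root_def Lam_fix_def using L fx n by simp
  then show ?thesis using n perp_scale[OF enz] by blast
qed

lemma dep_case3:
  assumes r: "r \<in> Lam" "herm r r = 1" and lam: "xi r = lam *s r"
    and e: "e \<in> eis" "e * cnj e = 1" "cnj (theta * e) * lam = theta * e"
  shows "\<exists>r'. lat_root xi r' \<and> (herm r' r' = 1 \<or> herm r' r' = 3) \<and> perp {r'} = perp {r}"
proof -
  have enz: "theta * e \<noteq> 0" using e(2) theta_nz by auto
  have te: "theta * e \<in> eis" using e by simp
  have L: "(theta * e) *s r \<in> Lam" using te r by simp
  have fx: "xi ((theta * e) *s r) = (theta * e) *s r" using xi_scale[OF te r(1)] lam e(3) by (simp add: vector_smult_assoc)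
  have tt: "theta * cnj theta = 3" using theta_sq theta_cnj by simp
  have "herm ((theta * e) *s r) ((theta * e) *s r) = (theta * cnj theta) * (e * cnj e) * herm r r"
    by (simp add: herm_scale_l herm_scale_r algebra_simps)
  then have n: "herm ((theta * e) *s r) ((theta * e) *s r) = 3" using tt e(2) r(2) by simp
  have dv: "\<exists>y\<in>Lam. (theta * e) *s r = theta *s y"
    using e r by (intro bexI[of _ "e *s r"]) (simp_all add: vector_smult_assoc)
  have "lat_root xi ((theta * e) *s r)" unfolding lat_root_def Lam_fix_def using L fx n dv by simp
  then show ?thesis using n perp_scale[OF enz] by blast
qed

lemma om2_eq: "omega * omega = Complex (-1/2) (- sqrt 3 / 2)"
  by (simp add: omega_eq complex_eq_iff field_simps)

lemma part1_dep:
  assumes r: "r \<in> Lam" "herm r r = 1" and lam: "xi r = lam *s r"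
  shows "\<exists>r'. lat_root xi r' \<and> (herm r' r' = 1 \<or> herm r' r' = 3) \<and> perp {r'} = perp {r}"
proof -
  have "herm (xi r) r = lam" using lam r by (simp add: herm_scale_l)
  then have leis: "lam \<in> eis" using r by (metis herm_Lam xi_Lam)
  have "herm (xi r) (xi r) = 1" using xi_herm[OF r(1) r(1)] r(2) by simp
  then have ln: "lam * cnj lam = 1" using lam r(2) by (simp add: herm_scale_l herm_scale_r mult.commute)
  obtain a b where ab: "lam = of_int a + of_int b * omega" "lam * cnj lam = of_int (a*a - a*b + b*b)"
    using eis_normsq[OF leis] by blast
  have "a*a - a*b + b*b = 1" using ab(2) ln by (metis of_int_eq_1_iff)
  then consider "a = 1 \<and> b = 0" | "a = -1 \<and> b = 0" | "a = 0 \<and> b = 1" | "a = 0 \<and> b = -1" | "a = 1 \<and> b = 1" | "a = -1 \<and> b = -1"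
    using unit6 by blast
  then show ?thesis
  proof cases
    case 1
    then have "lam = 1" using ab by simp
    then show ?thesis by (intro dep_case1[OF r lam, of 1]) simp_all
  next
    case 2
    then have "lam = -1" using ab by simp
    then show ?thesis by (intro dep_case3[OF r lam, of 1]) (simp_all add: theta_cnj)
  next
    case 3
    then have lo: "lam = omega" using ab by simp
    show ?thesis
      apply (rule dep_case1[OF r lam, of "omega * omega"])
        apply simp
       apply (simp add: om2_eq complex_eq_iff field_simps)
      apply (simp only: lo)
      apply (simp add: om2_eq omega_eq complex_eq_iff field_simps)
      done
  next
    case 4
    then have lo: "lam = - omega" using ab by simp
    show ?thesis
      apply (rule dep_case3[OF r lam, of "omega * omega"])
        apply simp
       apply (simp add: om2_eq complex_eq_iff field_simps)
      apply (simp only: lo)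
      apply (simp add: om2_eq omega_eq theta_eq complex_eq_iff field_simps)
      done
  next
    case 5
    then have lo: "lam = 1 + omega" using ab by simp
    show ?thesis
      apply (rule dep_case3[OF r lam, of "omega"])
        apply simp
       apply (simp add: om_norm)
      apply (simp only: lo)
      apply (simp add: omega_eq theta_eq complex_eq_iff field_simps)
      done
  next
    case 6
    then have lo: "lam = -1 - omega" using ab by simp
    show ?thesis
      apply (rule dep_case1[OF r lam, of "omega"])
        apply simp
       apply (simp add: om_norm)
      apply (simp only: lo)
      apply (simp add: omega_eq complex_eq_iff field_simps)
      done
  qed
qed

lemma Lam_fix_iff: "x \<in> Lam_fix xi \<longleftrightarrow> x \<in> Lam \<and> xi x = x"
  unfolding Lam_fix_def by simp

definition U6 :: "complex list" where
  "U6 = [1, -1, omega, - omega, omega * omega, - (omega * omega)]"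
definition T6 :: "complex list" where
  "T6 = [theta, - theta, theta * omega, - (theta * omega), theta * (omega * omega), - (theta * (omega * omega))]"

lemma U6_distinct: "distinct U6"
  unfolding U6_def by (simp add: om2_eq omega_eq complex_eq_iff)
lemma T6_distinct: "distinct T6"
  unfolding T6_def by (simp add: om2_eq omega_eq theta_eq complex_eq_iff)
lemma U6_props: "e \<in> set U6 \<Longrightarrow> e \<in> eis \<and> e * cnj e = 1"
  unfolding U6_def using om_norm by (auto simp: algebra_simps)
lemma T6_props: "e \<in> set T6 \<Longrightarrow> e \<in> eis \<and> e * cnj e = 3 \<and> (\<exists>d\<in>set U6. e = theta * d)"
proof -
  have tt: "theta * cnj theta = 3" using theta_sq theta_cnj by simp
  have t2: "theta * omega * (cnj theta * cnj omega) = 3" using tt om_norm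
    by (metis mult.assoc mult.left_commute mult_1_right)
  have t3: "theta * (omega * omega) * (cnj theta * (cnj omega * cnj omega)) = 3" using tt om_norm
    by (metis mult.assoc mult.left_commute mult_1_right)
  assume "e \<in> set T6"
  then show ?thesis unfolding T6_def U6_def using tt t2 t3 by (auto simp: algebra_simps)
qed

lemma part1_indep:
  assumes r: "r \<in> Lam" "herm r r = 1" and nd: "\<not> (\<exists>lam. xi r = lam *s r)"
    and L0: "L0 \<in> Hxi xi" "L0 \<in> perp {r}"
  shows "\<exists>R. G2_root_system xi R \<and> perp {r} \<inter> Hxi xi = Hxi xi \<inter> perp R"
proof -
  have "L0 \<in> CH4" using L0 unfolding Hxi_iff by blast
  then obtain v where v: "v \<in> L0" "Re (herm v v) < 0" using neg_vec_in_L by blast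
  have o: "\<forall>z\<in>L0. herm z r = 0" using L0(2) unfolding perp_iff by blast
  have hv1: "herm v r = 0" using o v by blast
  have hv2: "herm v (xi r) = 0" using orth_xi[OF L0(1) r(1) o v(1)] .
  have xrL: "xi r \<in> Lam" using r by simp
  have xx: "herm (xi r) (xi r) = 1" using xi_herm[OF r(1) r(1)] r(2) by simp
  define c where "c = herm r (xi r)"
  have c0: "c = 0"
  proof (rule ccontr)
    assume cnz: "c \<noteq> 0"
    have ceis: "c \<in> eis" unfolding c_def using r xrL by (simp add: herm_Lam)
    define w where "w = r - c *s xi r"
    have hvw: "herm v w = 0" unfolding w_def by (simp add: herm_diff_r herm_scale_r hv1 hv2)
    have xr: "herm (xi r) r = cnj c" unfolding c_def by (rule herm_sym)
    have hww: "herm w w = 1 - c * cnj c"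
      unfolding w_def by (simp only: herm_diff_l herm_diff_r herm_scale_l herm_scale_r r(2) xx xr c_def[symmetric]) (simp add: algebra_simps)
    have "c * cnj c = complex_of_real ((cmod c)^2)" by (rule complex_norm_square[symmetric])
    then have re: "Re (herm w w) = 1 - (cmod c)^2" using hww by simp
    have "1 \<le> (cmod c)^2" using eis_norm_ge1[OF ceis cnz] .
    then have "Re (herm w w) \<le> 0" using re by simp
    then have "w = 0" using signature[OF v(2) hvw] by simp
    then have "r = c *s xi r" unfolding w_def by simp
    then have "inverse c *s r = inverse c *s (c *s xi r)" by (rule arg_cong)
    also have "\<dots> = xi r" using cnz by (simp add: vector_smult_assoc)
    finally have "inverse c *s r = xi r" .
    then show False using nd by metis
  qed
  have xr0: "herm (xi r) r = 0" using c0 herm_sym[of "xi r" r] unfolding c_def by simp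
  define f where "f = (\<lambda>a. a *s r + cnj a *s xi r)"
  have fL: "a \<in> eis \<Longrightarrow> f a \<in> Lam" for a unfolding f_def using r xrL by simp
  have ffix: "a \<in> eis \<Longrightarrow> xi (f a) = f a" for a
  proof -
    assume a: "a \<in> eis"
    have "xi (f a) = xi (a *s r) + xi (cnj a *s xi r)" unfolding f_def using a r xrL by (simp add: xi_add)
    also have "\<dots> = cnj a *s xi r + a *s r" using a r xrL by (simp add: xi_scale)
    finally show ?thesis unfolding f_def by (simp add: add.commute)
  qed
  have fnorm: "herm (f a) (f a) = 2 * (a * cnj a)" for a
    unfolding f_def
    by (simp only: herm_add_l herm_add_r herm_scale_l herm_scale_r r(2) xx xr0 c0[unfolded c_def]) (simp add: algebra_simps)
  have finj: "herm (f a) r = a" for a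
    unfolding f_def by (simp add: herm_add_l herm_scale_l r(2) xr0)
  have fspan: "f (of_int p + of_int q * omega) = of_int p *s f 1 + of_int q *s f omega" for p q
    unfolding f_def vec_eq_iff by (simp add: algebra_simps)
  have fperp: "herm z (f a) = cnj a * herm z r + a * herm z (xi r)" for z a
    unfolding f_def by (simp add: herm_add_r herm_scale_r)
  define R2 where "R2 = f ` set U6"
  define R6 where "R6 = f ` set T6"
  define R where "R = R2 \<union> R6"
  have injf: "inj_on f A" for A by (rule inj_onI) (metis finj)
  have n2: "x \<in> R2 \<Longrightarrow> herm x x = 2" for x unfolding R2_def using fnorm U6_props by auto
  have n6: "x \<in> R6 \<Longrightarrow> herm x x = 6" for x unfolding R6_def using fnorm T6_props by auto
  have S2: "{x \<in> R. herm x x = 2} = R2" unfolding R_def using n2 n6 by auto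
  have S6: "{x \<in> R. herm x x = 6} = R6" unfolding R_def using n2 n6 by auto
  have cR2: "card R2 = 6" unfolding R2_def
    using card_image[OF injf[of "set U6"]] distinct_card[OF U6_distinct] by (simp add: U6_def)
  have cR6: "card R6 = 6" unfolding R6_def
    using card_image[OF injf[of "set T6"]] distinct_card[OF T6_distinct] by (simp add: T6_def)
  have eisR: "x \<in> R \<Longrightarrow> \<exists>a\<in>eis. x = f a" for x unfolding R_def R2_def R6_def using U6_props T6_props by auto
  have fixR: "x \<in> R \<Longrightarrow> x \<in> Lam_fix xi" for x using eisR fL ffix unfolding Lam_fix_iff by blast
  have rootR: "lat_root xi x \<and> (herm x x = 2 \<or> herm x x = 6)" if x: "x \<in> R" for x
  proof (cases "x \<in> R2")
    case True
    then show ?thesis unfolding lat_root_def using fixR[OF x] n2 by simp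
  next
    case False
    then have x6: "x \<in> R6" using x unfolding R_def by blast
    then obtain e where e: "e \<in> set T6" "x = f e" unfolding R6_def by blast
    obtain d where d: "d \<in> set U6" "e = theta * d" using T6_props[OF e(1)] by blast
    have deis: "d \<in> eis" using U6_props[OF d(1)] by blast
    have "x = theta *s (d *s r - cnj d *s xi r)"
      unfolding e(2) d(2) f_def vec_eq_iff by (simp add: theta_cnj algebra_simps)
    moreover have "d *s r - cnj d *s xi r \<in> Lam" using deis r xrL by simp
    ultimately have "\<exists>y\<in>Lam. x = theta *s y" by blast
    then show ?thesis unfolding lat_root_def using fixR[OF x] n6[OF x6] by simp
  qed
  have spanR: "R \<subseteq> {of_int a *s f 1 + of_int b *s f omega | a b. True}"
  proof
    fix x assume "x \<in> R"
    then obtain a where a: "a \<in> eis" "x = f a" using eisR by blast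
    then obtain p q where "a = of_int p + of_int q * omega" unfolding eis_iff by blast
    then show "x \<in> {of_int a *s f 1 + of_int b *s f omega | a b. True}" using a(2) fspan by blast
  qed
  have f1fix: "f 1 \<in> Lam_fix xi" "f omega \<in> Lam_fix xi" using fL ffix unfolding Lam_fix_iff by simp_all
  have G2: "G2_root_system xi R"
    unfolding G2_root_system_def using rootR S2 S6 cR2 cR6 spanR f1fix by blast
  have f1R: "f 1 \<in> R" "f theta \<in> R" unfolding R_def R2_def R6_def U6_def T6_def by auto
  have eq: "perp {r} \<inter> Hxi xi = Hxi xi \<inter> perp R"
  proof (rule set_eqI, rule iffI)
    fix L assume "L \<in> perp {r} \<inter> Hxi xi"
    then have L: "L \<in> Hxi xi" "L \<in> perp {r}" by auto
    have o: "\<forall>z\<in>L. herm z r = 0" using L(2) unfolding perp_iff by blast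
    have "\<forall>z\<in>L. \<forall>x\<in>R. herm z x = 0"
    proof (intro ballI)
      fix z x assume z: "z \<in> L" and x: "x \<in> R"
      obtain a where "x = f a" using eisR[OF x] by blast
      then show "herm z x = 0" using fperp o z orth_xi[OF L(1) r(1) o z] by simp
    qed
    then show "L \<in> Hxi xi \<inter> perp R" using L by (simp add: perp_iff)
  next
    fix L assume "L \<in> Hxi xi \<inter> perp R"
    then have L: "L \<in> Hxi xi" "L \<in> perp R" by auto
    have "\<forall>z\<in>L. herm z r = 0"
    proof
      fix z assume z: "z \<in> L"
      have a1: "herm z (f 1) = 0" "herm z (f theta) = 0" using L(2) z f1R unfolding perp_iff by blast+
      have e1: "herm z r + herm z (xi r) = 0" using a1(1) fperp[of z 1] by simp
      have e2: "theta * (herm z (xi r) - herm z r) = 0" using a1(2) fperp[of z theta] by (simp add: theta_cnj algebra_simps)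
      then have "herm z (xi r) = herm z r" using theta_nz by simp
      then show "herm z r = 0" using e1 by simp
    qed
    then show "L \<in> perp {r} \<inter> Hxi xi" using L by (simp add: perp_iff)
  qed
  show ?thesis using G2 eq by blast
qed

lemma fixed_herm_real:
  assumes "x \<in> Lam_fix xi" "y \<in> Lam_fix xi" shows "cnj (herm x y) = herm x y"
proof -
  have x: "x \<in> Lam" "xi x = x" and y: "y \<in> Lam" "xi y = y" using assms by (simp_all add: Lam_fix_iff)
  have "herm (xi x) (xi y) = cnj (herm x y)" using xi_herm x(1) y(1) by blast
  then show ?thesis using x(2) y(2) by simp
qed

lemma herm_lin3: "herm (of_int al *s x1 + of_int be *s x2 + of_int ga *s x3) z
    = of_int al * herm x1 z + of_int be * herm x2 z + of_int ga * herm x3 z"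
  by (simp add: herm_add_l herm_scale_l)
lemma herm_lin3r: "herm z (of_int al *s x1 + of_int be *s x2 + of_int ga *s x3)
    = of_int al * herm z x1 + of_int be * herm z x2 + of_int ga * herm z x3"
  by (simp add: herm_add_r herm_scale_r)

lemma G2_pm:
  assumes zs: "a1 \<in> zspan u w" "a \<in> zspan u w" "b \<in> zspan u w"
    and n: "herm a1 a1 = 2" "herm a a = 2" "herm b b = 6" and o: "herm a1 b = 0" "herm a b = 0"
  shows "a = a1 \<or> a = - a1"
proof -
  obtain al be ga :: int where nz: "\<not> (al = 0 \<and> be = 0 \<and> ga = 0)"
    and eq: "of_int al *s a1 + of_int be *s a + of_int ga *s b = 0"
    using DEP[OF zs] by blast
  have "herm (of_int al *s a1 + of_int be *s a + of_int ga *s b) b = 0" using eq by (simp add: herm_zero_l)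
  then have "of_int ga * 6 = (0::complex)" unfolding herm_lin3 using o n by simp
  then have ga: "ga = 0" by simp
  then have eq2: "of_int be *s a = - (of_int al *s a1)" using eq by (simp add: eq_neg_iff_add_eq_0 add.commute)
  have be: "be \<noteq> 0"
  proof
    assume "be = 0"
    then have "al \<noteq> 0" using nz ga by simp
    moreover have "of_int al *s a1 = 0" using eq2 \<open>be = 0\<close> by simp
    ultimately have "a1 = 0" by simp
    then show False using n(1) by (simp add: herm_zero_l)
  qed
  have "herm (of_int be *s a) (of_int be *s a) = herm (of_int al *s a1) (of_int al *s a1)"
    using eq2 by (simp add: herm_neg_l herm_neg_r)
  then have "of_int be * of_int be * 2 = (of_int al * of_int al * 2 :: complex)"
    using n by (simp add: herm_scale_l herm_scale_r)
  then have "of_int (be * be * 2) = (of_int (al * al * 2) :: complex)" by simp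
  then have "be * be * 2 = al * al * 2" by (simp only: of_int_eq_iff)
  then have "be * be = al * al" by simp
  then have "be = al \<or> be = -al" using square_eq_iff by blast
  then show ?thesis
  proof
    assume "be = al"
    then have "of_int be *s a = of_int be *s (- a1)" using eq2 by (simp add: vector_smult_rneg)
    then have "of_int be = (0::complex) \<or> a = - a1" by (simp only: vector_mul_lcancel)
    then show ?thesis using be by simp
  next
    assume "be = -al"
    then have "of_int be *s a = of_int be *s a1" using eq2 by simp
    then have "of_int be = (0::complex) \<or> a = a1" by (simp only: vector_mul_lcancel)
    then show ?thesis using be by simp
  qed
qed

lemma part3:
  assumes G: "G2_root_system xi R"
  shows "\<exists>M. discriminant_mirror M \<and> Hxi xi \<inter> perp R = Hxi xi \<inter> M"
proof (cases "Hxi xi \<inter> perp R = {}")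
  case True
  obtain r where r: "r \<in> Lam" "herm r r = 1" "Hxi xi \<inter> perp {r} = {}" using exists_disjoint_mirror by blast
  have "discriminant_mirror (perp {r})" unfolding discriminant_mirror_def using r by blast
  then show ?thesis using True r(3) by blast
next
  case False
  then obtain L0 where L0: "L0 \<in> Hxi xi" "L0 \<in> perp R" by blast
  have "L0 \<in> CH4" using L0 unfolding Hxi_iff by blast
  then obtain v where v: "v \<in> L0" "Re (herm v v) < 0" using neg_vec_in_L by blast
  have hvR: "\<forall>x\<in>R. herm v x = 0" using L0(2) v(1) unfolding perp_iff by blast
  have rootR: "\<forall>x\<in>R. lat_root xi x \<and> (herm x x = 2 \<or> herm x x = 6)"
    and c2: "card {x\<in>R. herm x x = 2} = 6" and c6: "card {x\<in>R. herm x x = 6} = 6"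
    using G unfolding G2_root_system_def by blast+
  obtain u w where uw: "u \<in> Lam_fix xi" "w \<in> Lam_fix xi" "R \<subseteq> {of_int a *s u + of_int b *s w | a b. True}"
    using G unfolding G2_root_system_def by blast
  have zs: "x \<in> R \<Longrightarrow> x \<in> zspan u w" for x using uw(3) unfolding zspan_def by blast
  have fixR: "x \<in> R \<Longrightarrow> x \<in> Lam_fix xi" for x using rootR unfolding lat_root_def by blast
  define R2 where "R2 = {x\<in>R. herm x x = 2}"
  define R6 where "R6 = {x\<in>R. herm x x = 6}"
  have "R2 \<noteq> {}"
  proof
    assume e: "R2 = {}"
    have "card R2 = 6" using c2 unfolding R2_def .
    then show False using e by simp
  qed
  then obtain a1 where a1: "a1 \<in> R2" by blast
  have "R6 \<noteq> {}"
  proof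
    assume e: "R6 = {}"
    have "card R6 = 6" using c6 unfolding R6_def .
    then show False using e by simp
  qed
  then obtain b where b: "b \<in> R6" by blast
  have bR: "b \<in> R" "herm b b = 6" using b unfolding R6_def by auto
  have "\<exists>a\<in>R2. herm a b \<noteq> 0"
  proof (rule ccontr)
    assume "\<not> ?thesis"
    then have o: "\<forall>a\<in>R2. herm a b = 0" by blast
    have "R2 \<subseteq> {a1, - a1}"
    proof
      fix a assume a: "a \<in> R2"
      have "a = a1 \<or> a = - a1"
        apply (rule G2_pm[of a1 u w a b])
        using a a1 bR zs o unfolding R2_def by auto
      then show "a \<in> {a1, - a1}" by blast
    qed
    then have "card R2 \<le> card {a1, - a1}" by (intro card_mono) auto
    also have "\<dots> \<le> 2" by (simp add: card_insert_le_m1)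
    finally show False using c2 unfolding R2_def by simp
  qed
  then obtain a where a: "a \<in> R2" "herm a b \<noteq> 0" by blast
  have aR: "a \<in> R" "herm a a = 2" using a unfolding R2_def by auto
  have aF: "a \<in> Lam" "xi a = a" using fixR[OF aR(1)] unfolding Lam_fix_iff by auto
  have bF: "b \<in> Lam" "xi b = b" using fixR[OF bR(1)] unfolding Lam_fix_iff by auto
  obtain y where y: "y \<in> Lam" "b = theta *s y"
    using rootR bR unfolding lat_root_def by auto
  define s where "s = herm a b"
  have sreal: "cnj s = s" unfolding s_def using fixed_herm_real fixR aR(1) bR(1) by blast
  have hba: "herm b a = s" using sreal herm_sym[of b a] unfolding s_def by simp
  have hay_eis: "herm a y \<in> eis" using aF y by (simp add: herm_Lam)
  then obtain p q where pq: "herm a y = of_int p + of_int q * omega" unfolding eis_iff by blast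
  have s_eq: "s = cnj theta * (of_int p + of_int q * omega)" unfolding s_def y(2) by (simp add: herm_scale_r pq)
  have "Im s = sqrt 3 * (of_int q / 2 - of_int p)"
    unfolding s_eq by (simp add: theta_eq omega_eq field_simps)
  moreover have "Im s = 0"
  proof -
    have "Im (cnj s) = Im s" using sreal by simp
    then show ?thesis by simp
  qed
  ultimately have "of_int q / 2 - of_int p = (0::real)" by simp
  then have qp: "q = 2 * p" by linarith
  have hay: "herm a y = of_int p * theta" unfolding pq qp by (simp add: theta_om algebra_simps)
  have s3: "s = of_int (3 * p)" unfolding s_eq qp by (simp add: omega_eq theta_eq complex_eq_iff field_simps)
  have pnz: "p \<noteq> 0" using a(2) s3 unfolding s_def by auto
  have hvab: "herm v a = 0" "herm v b = 0" using hvR aR(1) bR(1) by auto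
  have pp: "p * p = 1"
  proof (rule ccontr)
    assume "p * p \<noteq> 1"
    moreover have "-1 \<le> p \<and> p \<le> 1 \<Longrightarrow> p * p = 1" using pnz by (cases "p = 1"; cases "p = -1") auto
    ultimately have "\<not> (-1 \<le> p \<and> p \<le> 1)" by blast
    then have p2: "2 \<le> p * p" using sq_le1[of p] by linarith
    define z where "z = 6 *s a - s *s b"
    have hvz: "herm v z = 0" unfolding z_def by (simp add: herm_diff_r herm_scale_r hvab)
    have hzz: "herm z z = 72 - 6 * (s * s)"
      unfolding z_def by (simp only: herm_diff_l herm_diff_r herm_scale_l herm_scale_r aR(2) bR(2) hba s_def[symmetric]) (simp add: algebra_simps)
    then have hzz2: "herm z z = of_int (72 - 54 * (p * p))" using sreal s3 by simp
    have "real_of_int 2 \<le> real_of_int (p*p)" using p2 by (simp only: of_int_le_iff)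
    then have p2r: "(2::real) \<le> of_int p * of_int p" by simp
    have "Re (herm z z) \<le> 0" using p2r hzz2 by simp
    then have "z = 0" using signature[OF v(2) hvz] by simp
    then have "herm z z = 0" by (simp add: herm_zero_l)
    then have "(of_int (72 - 54 * (p * p)) :: complex) = 0" by (rule trans[OF hzz2[symmetric]])
    then have "72 - 54 * (p * p) = 0" by (simp only: of_int_eq_0_iff)
    then show False using p2 by linarith
  qed
  have yy: "herm y y = 2"
  proof -
    have "6 = herm b b" using bR by simp
    also have "\<dots> = (theta * cnj theta) * herm y y" unfolding y(2) by (simp add: herm_scale_l herm_scale_r)
    also have "\<dots> = 3 * herm y y" using theta_sq theta_cnj by simp
    finally show ?thesis by simp
  qed
  have xiy: "xi y = - y"
  proof -
    have "xi b = cnj theta *s xi y" unfolding y(2) using xi_scale[OF eis_theta y(1)] .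
    then have "theta *s y = (- theta) *s xi y" using bF(2) y(2) theta_cnj by simp
    then have "theta *s (- y) = theta *s xi y" by (simp add: vector_smult_lneg vector_smult_rneg)
    then have "theta = 0 \<or> - y = xi y" by (simp only: vector_mul_lcancel)
    then show ?thesis using theta_nz by auto
  qed
  define k where "k = of_int p * (omega * omega)"
  have keis: "k \<in> eis" unfolding k_def by simp
  define r where "r = a + k *s y"
  have rL: "r \<in> Lam" unfolding r_def using aF y keis by simp
  have hya: "herm y a = - of_int p * theta" using hay herm_sym[of y a] theta_cnj by simp
  have rr: "herm r r = 1"
  proof -
    have "herm r r = herm a a + cnj k * herm a y + k * herm y a + k * cnj k * herm y y"
      unfolding r_def by (simp add: herm_add_l herm_add_r herm_scale_l herm_scale_r algebra_simps)
    also have "\<dots> = 1"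
    proof -
      have "-1 \<le> p \<and> p \<le> 1" using sq_le1[of p] pp by simp
      then have "p = 1 \<or> p = -1" using pnz by auto
      then show ?thesis
        unfolding aR(2) hay hya yy k_def
        by (elim disjE) (simp_all add: omega_eq theta_eq complex_eq_iff field_simps)
    qed
    finally show ?thesis .
  qed
  have DM: "discriminant_mirror (perp {r})" unfolding discriminant_mirror_def using rL rr by blast
  have xir: "xi r = a - cnj k *s y"
    unfolding r_def using xi_add[OF aF(1), of "k *s y"] xi_scale[OF keis y(1)] aF y keis xiy by simp
  have ksum: "cnj k + k = - of_int p"
  proof -
    have c: "cnj omega * cnj omega = omega" by (simp add: omega_eq complex_eq_iff field_simps)
    have "cnj k + k = of_int p * (cnj omega * cnj omega + omega * omega)" unfolding k_def by (simp add: algebra_simps)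
    also have "\<dots> = of_int p * (omega + (-1 - omega))" unfolding c om_sq ..
    finally show ?thesis by simp
  qed
  have eq: "Hxi xi \<inter> perp R = Hxi xi \<inter> perp {r}"
  proof (rule set_eqI, rule iffI)
    fix L assume "L \<in> Hxi xi \<inter> perp R"
    then have L: "L \<in> Hxi xi" "L \<in> perp R" by auto
    have "\<forall>z\<in>L. herm z r = 0"
    proof
      fix z assume z: "z \<in> L"
      have "herm z a = 0" "herm z b = 0" using L(2) z aR(1) bR(1) unfolding perp_iff by blast+
      then have "herm z y = 0" using theta_nz theta_cnj unfolding y(2) by (simp add: herm_scale_r)
      then show "herm z r = 0" unfolding r_def using \<open>herm z a = 0\<close> by (simp add: herm_add_r herm_scale_r)
    qed
    then show "L \<in> Hxi xi \<inter> perp {r}" using L by (simp add: perp_iff)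
  next
    fix L assume "L \<in> Hxi xi \<inter> perp {r}"
    then have L: "L \<in> Hxi xi" "L \<in> perp {r}" by auto
    have o: "\<forall>z\<in>L. herm z r = 0" using L(2) unfolding perp_iff by blast
    have "\<forall>z\<in>L. \<forall>x\<in>R. herm z x = 0"
    proof (intro ballI)
      fix z x assume z: "z \<in> L" and x: "x \<in> R"
      have h1: "herm z a + cnj k * herm z y = 0" using o z unfolding r_def by (simp add: herm_add_r herm_scale_r)
      have h2: "herm z a - k * herm z y = 0" using orth_xi[OF L(1) rL o z] unfolding xir
        by (simp add: herm_diff_r herm_scale_r)
      have "(cnj k + k) * herm z y = 0" using h1 h2 by (simp add: algebra_simps)
      then have zy: "herm z y = 0" using ksum pnz by simp
      then have za: "herm z a = 0" using h1 by simp
      have zb: "herm z b = 0" unfolding y(2) using zy by (simp add: herm_scale_r)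
      obtain al be ga :: int where nz: "\<not> (al = 0 \<and> be = 0 \<and> ga = 0)"
        and eq: "of_int al *s x + of_int be *s a + of_int ga *s b = 0"
        using DEP[OF zs[OF x] zs[OF aR(1)] zs[OF bR(1)]] by blast
      show "herm z x = 0"
      proof (cases "al = 0")
        case False
        have "herm z (of_int al *s x + of_int be *s a + of_int ga *s b) = 0" using eq by (simp add: herm_zero_r)
        then have "of_int al * herm z x = 0" unfolding herm_lin3r using za zb by simp
        then show ?thesis using False by simp
      next
        case True
        have e1: "herm (of_int al *s x + of_int be *s a + of_int ga *s b) a = 0" using eq by (simp add: herm_zero_l)
        have e2: "herm (of_int al *s x + of_int be *s a + of_int ga *s b) b = 0" using eq by (simp add: herm_zero_l)
        have "of_int (2 * be + 3 * p * ga) = (0::complex)"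
          using e1 unfolding herm_lin3 using True aR(2) hba s3 by (simp add: algebra_simps)
        then have i1: "2 * be + 3 * p * ga = 0" by (simp only: of_int_eq_0_iff)
        have "of_int (3 * p * be + 6 * ga) = (0::complex)"
          using e2 unfolding herm_lin3 using True bR(2) s3 unfolding s_def by (simp add: algebra_simps)
        then have i2: "3 * p * be + 6 * ga = 0" by (simp only: of_int_eq_0_iff)
        have "3 * p * (2 * be + 3 * p * ga) - 2 * (3 * p * be + 6 * ga) = 0" using i1 i2 by simp
        then have "9 * (p * p) * ga - 12 * ga = 0" by (simp add: algebra_simps)
        then have "ga = 0" using pp by simp
        then have "be = 0" using i1 by simp
        then show ?thesis using nz True \<open>ga = 0\<close> by simp
      qed
    qed
    then show "L \<in> Hxi xi \<inter> perp R" using L by (simp add: perp_iff)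
  qed
  show ?thesis using DM eq by blast
qed

end

theorem lemma6p1:
  assumes "anti_involution xi"
  shows "(\<forall>M. discriminant_mirror M \<and> M \<inter> Hxi xi \<noteq> {} \<longrightarrow>
            (\<exists>r. lat_root xi r \<and> (herm r r = 1 \<or> herm r r = 3) \<and>
                 M \<inter> Hxi xi = Hxi xi \<inter> perp {r})
          \<or> (\<exists>R. G2_root_system xi R \<and> M \<inter> Hxi xi = Hxi xi \<inter> perp R))
       \<and> (\<forall>r. lat_root xi r \<and> (herm r r = 1 \<or> herm r r = 3) \<longrightarrow>
            (\<exists>M. discriminant_mirror M \<and> Hxi xi \<inter> perp {r} = Hxi xi \<inter> M))
       \<and> (\<forall>R. G2_root_system xi R \<longrightarrow>
            (\<exists>M. discriminant_mirror M \<and> Hxi xi \<inter> perp R = Hxi xi \<inter> M))"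
proof (intro conjI allI impI)
  fix M assume hM: "discriminant_mirror M \<and> M \<inter> Hxi xi \<noteq> {}"
  then obtain r where r: "r \<in> Lam" "herm r r = 1" "M = perp {r}" unfolding discriminant_mirror_def by blast
  obtain L0 where L0: "L0 \<in> Hxi xi" "L0 \<in> perp {r}" using hM r(3) by blast
  show "(\<exists>r. lat_root xi r \<and> (herm r r = 1 \<or> herm r r = 3) \<and> M \<inter> Hxi xi = Hxi xi \<inter> perp {r})
          \<or> (\<exists>R. G2_root_system xi R \<and> M \<inter> Hxi xi = Hxi xi \<inter> perp R)"
  proof (cases "\<exists>lam. xi r = lam *s r")
    case True
    then obtain lam where "xi r = lam *s r" by blast
    then obtain r' where r': "lat_root xi r'" "herm r' r' = 1 \<or> herm r' r' = 3" "perp {r'} = perp {r}"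
      using part1_dep[OF assms r(1) r(2)] by blast
    have "M \<inter> Hxi xi = Hxi xi \<inter> perp {r'}" using r(3) r'(3) by blast
    then show ?thesis using r' by blast
  next
    case False
    obtain R where "G2_root_system xi R" "perp {r} \<inter> Hxi xi = Hxi xi \<inter> perp R"
      using part1_indep[OF assms r(1) r(2) False L0] by blast
    then show ?thesis using r(3) by blast
  qed
next
  fix r assume hr: "lat_root xi r \<and> (herm r r = 1 \<or> herm r r = 3)"
  then have rL: "r \<in> Lam" unfolding lat_root_def Lam_fix_def by blast
  show "\<exists>M. discriminant_mirror M \<and> Hxi xi \<inter> perp {r} = Hxi xi \<inter> M"
  proof (cases "herm r r = 1")
    case True
    then have "discriminant_mirror (perp {r})" unfolding discriminant_mirror_def using rL by blast
    then show ?thesis by blast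
  next
    case False
    then have r3: "herm r r = 3" using hr by blast
    then obtain y where y: "y \<in> Lam" "r = theta *s y" using hr unfolding lat_root_def by auto
    have "3 = herm r r" using r3 by simp
    also have "\<dots> = (theta * cnj theta) * herm y y" unfolding y(2) by (simp add: herm_scale_l herm_scale_r)
    also have "\<dots> = 3 * herm y y" using theta_sq theta_cnj by simp
    finally have "herm y y = 1" by simp
    then have "discriminant_mirror (perp {y})" unfolding discriminant_mirror_def using y(1) by blast
    moreover have "perp {r} = perp {y}" unfolding y(2) using perp_scale[OF theta_nz] .
    ultimately show ?thesis by auto
  qed
next
  fix R assume "G2_root_system xi R"
  then show "\<exists>M. discriminant_mirror M \<and> Hxi xi \<inter> perp R = Hxi xi \<inter> M"
    using part3[OF assms] by blast
qed

end
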